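(* Let $P\subseteq\mathbb{R}^n$ be a permutation-invariant polytope, $\phi:P\to\mathbb{R}$ a Schur-concave function on $P$, and $\alpha\in\mathbb{R}$. Let $M=\{x\in P\mid$ there is no $u\in P$ with $u\ge_m x$ and $u_\Delta\ne x_\Delta\}$, $S=\{(x,t)\mid\phi(x)\le t\le\alpha,\ x\in P\}$ and $X=\{(x,t)\mid\phi(x)\le t\le\alpha,\ x\in M\}$. Then $\mathrm{conv}(S)=\mathrm{conv}(X)$.
   Context: $P$ is permutation-invariant if $x\in P$ implies $Qx\in P$ for every permutation matrix $Q$. $\phi$ is Schur-concave on $P$ if for all $x,y\in P$, $x\ge_m y$ implies $\phi(x)\le\phi(y)$. $x_{[i]}$ is the $i$-th largest entry; $x\ge_m y$ means $\sum_{i=1}^j x_{[i]}\ge\sum_{i=1}^j y_{[i]}$ for $j<n$ with equality for $j=n$. For $x\in\mathbb{R}^n$, $x_\Delta\in\mathbb{R}^n$ is the vector $(x_{[1]},\dots,x_{[n]})$ (entries sorted nonincreasingly). *)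

theory Defs
  imports "HOL-Analysis.Analysis" "HOL-Library.Multiset"
begin

text \<open>The entries of x sorted nonincreasingly: the list [x_[1], ..., x_[n]],
  i.e. the vector x_Delta written as a list.\<close>
definition sorted_desc :: "real^'n \<Rightarrow> real list" where
  "sorted_desc x = rev (sorted_list_of_multiset (image_mset (\<lambda>i. x $ i) (mset_set (UNIV :: 'n set))))"

text \<open>x_[i] for 1 \<le> i \<le> n\<close>
definition kth_largest :: "real^'n \<Rightarrow> nat \<Rightarrow> real" where
  "kth_largest x i = sorted_desc x ! (i - 1)"

text \<open>We only need
  equality of x_Delta's, which is equality of the sorted lists.\<close>

definition majorizes :: "real^'n \<Rightarrow> real^'n \<Rightarrow> bool" (infix "\<ge>\<^sub>m" 50) where
  "majorizes x y \<longleftrightarrow>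
     (\<forall>j. 1 \<le> j \<and> j < CARD('n) \<longrightarrow> (\<Sum>i=1..j. kth_largest x i) \<ge> (\<Sum>i=1..j. kth_largest y i)) \<and>
     (\<Sum>i=1..CARD('n). kth_largest x i) = (\<Sum>i=1..CARD('n). kth_largest y i)"

definition permutation_invariant :: "(real^'n) set \<Rightarrow> bool" where
  "permutation_invariant P \<longleftrightarrow>
     (\<forall>x\<in>P. \<forall>\<sigma>. \<sigma> permutes (UNIV :: 'n set) \<longrightarrow> (\<chi> i. x $ \<sigma> i) \<in> P)"

definition schur_concave_on :: "(real^'n) set \<Rightarrow> (real^'n \<Rightarrow> real) \<Rightarrow> bool" where
  "schur_concave_on P \<phi> \<longleftrightarrow> (\<forall>x\<in>P. \<forall>y\<in>P. x \<ge>\<^sub>m y \<longrightarrow> \<phi> x \<le> \<phi> y)"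

end

theory Submission
  imports Defs
begin

definition enum_idx :: "'n::finite list" where
  "enum_idx = (SOME xs. distinct xs \<and> set xs = UNIV)"

lemma enum_idx: "distinct (enum_idx::'n::finite list)" "set (enum_idx::'n list) = UNIV"
  "length (enum_idx::'n list) = CARD('n)"
proof -
  have "\<exists>xs. distinct xs \<and> set xs = (UNIV::'n set)" using finite_distinct_list[of "UNIV::'n set"] by auto
  then have "distinct (enum_idx::'n::finite list) \<and> set (enum_idx::'n list) = UNIV"
    unfolding enum_idx_def by (rule someI_ex)
  then show "distinct (enum_idx::'n::finite list)" "set (enum_idx::'n list) = UNIV"
    "length (enum_idx::'n list) = CARD('n)" by (auto simp: distinct_card[symmetric])
qed

definition sortidx :: "real^'n \<Rightarrow> 'n list" where
  "sortidx v = sort_key (\<lambda>i. - (v$i)) enum_idx"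

lemma sortidx_basic: fixes v :: "real^'n" shows "distinct (sortidx v)" "set (sortidx v) = UNIV" "length (sortidx v) = CARD('n)"
  using enum_idx by (auto simp: sortidx_def)

lemma sortidx_sorted: "sorted (map (\<lambda>i. - (v$i)) (sortidx v))"
  unfolding sortidx_def by (rule sorted_sort_key)

lemma sortidx_mono: fixes v :: "real^'n" assumes "i \<le> j" "j < CARD('n)" shows "v $ (sortidx v ! j) \<le> v $ (sortidx v ! i)"
proof -
  have "(map (\<lambda>i. - (v$i)) (sortidx v)) ! i \<le> (map (\<lambda>i. - (v$i)) (sortidx v)) ! j"
    using sortidx_sorted[of v] assms sortidx_basic(3)[of v] by (intro sorted_nth_mono) auto
  then show ?thesis using assms sortidx_basic(3)[of v] by auto
qed

lemma sorted_desc_sortidx: fixes v :: "real^'n" shows "sorted_desc v = map (\<lambda>i. v$i) (sortidx v)"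
proof -
  have m: "mset_set (UNIV::'n set) = mset (enum_idx::'n list)" using enum_idx mset_set_set by metis
  have "sort (map (\<lambda>i. v$i) enum_idx) = rev (map (\<lambda>i. v$i) (sortidx v))"
  proof (rule properties_for_sort)
    show "mset (rev (map (($) v) (sortidx v))) = mset (map (($) v) enum_idx)"
      by (simp add: sortidx_def)
    have "sorted_wrt (\<ge>) (map (($) v) (sortidx v))"
      using sortidx_sorted[of v] by (simp add: sorted_wrt_map sorted_map)
    then show "sorted (rev (map (($) v) (sortidx v)))" by (simp add: sorted_wrt_rev)
  qed
  then show ?thesis unfolding sorted_desc_def m by (simp add: mset_map[symmetric] del: mset_map)
qed


lemma kth_sortidx: fixes v :: "real^'n"
  assumes "1 \<le> i" "i \<le> CARD('n)" shows "kth_largest v i = v $ (sortidx v ! (i-1))"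
  using assms sortidx_basic(3)[of v] by (simp add: kth_largest_def sorted_desc_sortidx)

lemma TT_eq: fixes v :: "real^'n"
  assumes "j \<le> CARD('n)" shows "(\<Sum>i=1..j. kth_largest v i) = (\<Sum>k<j. v $ (sortidx v ! k))"
  using assms
proof (induction j)
  case 0 then show ?case by simp
next
  case (Suc j)
  then show ?case by (simp add: kth_sortidx)
qed

definition topset :: "real^'n \<Rightarrow> nat \<Rightarrow> 'n set" where
  "topset v j = (\<lambda>k. sortidx v ! k) ` {..<j}"

lemma topset_props: fixes v :: "real^'n"
  assumes "j \<le> CARD('n)"
  shows "card (topset v j) = j" "(\<Sum>k<j. f (sortidx v ! k)) = sum f (topset v j)"
proof -
  have inj: "inj_on (\<lambda>k. sortidx v ! k) {..<j}"
    using sortidx_basic[of v] assms by (auto simp: inj_on_def nth_eq_iff_index_eq)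
  show "card (topset v j) = j" unfolding topset_def using card_image[OF inj] by simp
  show "(\<Sum>k<j. f (sortidx v ! k)) = sum f (topset v j)"
    unfolding topset_def using sum.reindex[OF inj, of f] by simp
qed

lemma topk: fixes v :: "real^'n"
  assumes "card A = j"
  shows "sum (\<lambda>i. v$i) A \<le> (\<Sum>k<j. v $ (sortidx v ! k))"
proof (cases "j = 0")
  case True
  then have "A = {}" using assms by auto
  then show ?thesis using True by simp
next
  case False
  let ?L = "sortidx v"
  have jn: "j \<le> CARD('n)" using assms card_mono[of UNIV A] by auto
  define B where "B = topset v j"
  define th where "th = v $ (?L ! (j-1))"
  have cB: "card B = j" and sB: "(\<Sum>k<j. v $ (?L ! k)) = sum (\<lambda>i. v$i) B"
    using topset_props[OF jn] B_def by auto
  have geB: "v$i \<ge> th" if iB: "i \<in> B" for i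
  proof -
    obtain k where "k < j" "i = ?L ! k" using iB unfolding B_def topset_def by auto
    then show ?thesis unfolding th_def using sortidx_mono[of k "j-1" v] jn by auto
  qed
  have leB: "v$i \<le> th" if "i \<notin> B" for i
  proof -
    have "i \<in> set ?L" using sortidx_basic by auto
    then obtain k where k: "k < CARD('n)" "i = ?L ! k" using sortidx_basic(3) by (metis in_set_conv_nth)
    have "\<not> k < j" using that k B_def topset_def by auto
    then show ?thesis unfolding th_def k using sortidx_mono[of "j-1" k v] k by auto
  qed
  have fin: "finite A" "finite B" by auto
  have c: "card (A - B) = card (B - A)"
    using cB assms by (metis card_Diff_subset_Int card_eq_0_iff fin inf_commute add_diff_cancel_left' card_Int_Diff)
  have "sum (\<lambda>i. v$i) A = sum (\<lambda>i. v$i) (A \<inter> B) + sum (\<lambda>i. v$i) (A - B)"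
    by (metis fin(1) sum.Int_Diff)
  also have "sum (\<lambda>i. v$i) (A - B) \<le> of_nat (card (A - B)) * th"
    using sum_bounded_above[of "A - B" "\<lambda>i. v$i" th] leB by auto
  also have "of_nat (card (A - B)) * th \<le> sum (\<lambda>i. v$i) (B - A)"
    using sum_bounded_below[of "B - A" th "\<lambda>i. v$i"] geB c by auto
  also have "sum (\<lambda>i. v$i) (A \<inter> B) + sum (\<lambda>i. v$i) (B - A) = sum (\<lambda>i. v$i) B"
    by (metis fin(2) inf_commute sum.Int_Diff)
  finally show ?thesis using sB by simp
qed


lemma abel_id:
  fixes a e :: "nat \<Rightarrow> real"
  shows "(\<Sum>k<Suc m. a k * e k) = (\<Sum>k<m. (a k - a (Suc k)) * (\<Sum>i\<le>k. e i)) + a m * (\<Sum>i\<le>m. e i)"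
proof (induction m)
  case 0 then show ?case by simp
next
  case (Suc m)
  have "(\<Sum>k<Suc (Suc m). a k * e k) = (\<Sum>k<Suc m. a k * e k) + a (Suc m) * e (Suc m)" by simp
  also have "\<dots> = (\<Sum>k<m. (a k - a (Suc k)) * (\<Sum>i\<le>k. e i)) + a m * (\<Sum>i\<le>m. e i) + a (Suc m) * e (Suc m)"
    using Suc by simp
  also have "\<dots> = (\<Sum>k<Suc m. (a k - a (Suc k)) * (\<Sum>i\<le>k. e i)) + a (Suc m) * (\<Sum>i\<le>Suc m. e i)"
    by (simp add: algebra_simps)
  finally show ?case .
qed

lemma abel_ineq:
  fixes a b d :: "nat \<Rightarrow> real"
  assumes "\<And>k. Suc k < m \<Longrightarrow> a (Suc k) \<le> a k"
    and "\<And>k. Suc k < m \<Longrightarrow> (\<Sum>i\<le>k. b i) \<le> (\<Sum>i\<le>k. d i)"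
    and "(\<Sum>i<m. b i) = (\<Sum>i<m. d i)"
  shows "(\<Sum>k<m. a k * b k) \<le> (\<Sum>k<m. a k * d k)"
proof (cases m)
  case 0 then show ?thesis by simp
next
  case (Suc p)
  define e where "e i = d i - b i" for i
  have "(\<Sum>k<m. a k * d k) - (\<Sum>k<m. a k * b k) = (\<Sum>k<Suc p. a k * e k)"
    unfolding e_def Suc by (simp add: sum_subtractf algebra_simps)
  also have "\<dots> = (\<Sum>k<p. (a k - a (Suc k)) * (\<Sum>i\<le>k. e i)) + a p * (\<Sum>i\<le>p. e i)"
    by (rule abel_id)
  finally have eq: "(\<Sum>k<m. a k * d k) - (\<Sum>k<m. a k * b k) = (\<Sum>k<p. (a k - a (Suc k)) * (\<Sum>i\<le>k. e i)) + a p * (\<Sum>i\<le>p. e i)" .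
  have z: "(\<Sum>i\<le>p. e i) = 0"
    using assms(3) unfolding e_def Suc by (simp add: sum_subtractf lessThan_Suc_atMost)
  have nn: "(\<Sum>k<p. (a k - a (Suc k)) * (\<Sum>i\<le>k. e i)) \<ge> 0"
  proof (rule sum_nonneg)
    fix k assume "k \<in> {..<p}"
    then have "Suc k < m" using Suc by auto
    then show "0 \<le> (a k - a (Suc k)) * (\<Sum>i\<le>k. e i)"
      using assms(1,2)[of k] unfolding e_def by (simp add: sum_subtractf)
  qed
  show ?thesis using eq z nn by simp
qed

lemma bij_sortidx: fixes v :: "real^'n"
  shows "bij_betw (\<lambda>k. sortidx v ! k) {..<CARD('n)} UNIV"
  using sortidx_basic[of v] by (metis bij_betw_nth)

lemma sum_sortidx: fixes v :: "real^'n"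
  shows "(\<Sum>k<CARD('n). f (sortidx v ! k)) = sum f UNIV"
  using sum.reindex_bij_betw[OF bij_sortidx[of v], of f] by simp


lemma perm_bound:
  fixes x u c :: "real^'n"
  assumes maj: "u \<ge>\<^sub>m x"
  shows "\<exists>\<sigma>. \<sigma> permutes (UNIV::'n set) \<and> inner c x \<le> inner c (\<chi> i. u $ \<sigma> i)"
proof -
  let ?n = "CARD('n)"
  let ?L = "sortidx c" and ?Lu = "sortidx u" and ?Lx = "sortidx x"
  define a where "a k = c $ (?L ! k)" for k
  define b where "b k = x $ (?L ! k)" for k
  define d where "d k = u $ (?Lu ! k)" for k
  define \<sigma> where "\<sigma> = (\<lambda>k. ?Lu ! k) \<circ> inv_into {..<?n} (\<lambda>k. ?L ! k)"
  have bL: "bij_betw (\<lambda>k. ?L ! k) {..<?n} UNIV" by (rule bij_sortidx)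
  have bLu: "bij_betw (\<lambda>k. ?Lu ! k) {..<?n} UNIV" by (rule bij_sortidx)
  have "bij_betw \<sigma> UNIV UNIV"
    unfolding \<sigma>_def using bij_betw_trans[OF bij_betw_inv_into[OF bL] bLu] .
  then have perm: "\<sigma> permutes UNIV" by (rule bij_imp_permutes) simp
  have sig: "\<sigma> (?L ! k) = ?Lu ! k" if "k < ?n" for k
    unfolding \<sigma>_def using bL that by (simp add: bij_betw_def inv_into_f_f)
  have cx: "inner c x = (\<Sum>k<?n. a k * b k)"
    unfolding inner_vec_def a_def b_def using sum_sortidx[of "\<lambda>i. inner (c$i) (x$i)" c] by simp
  have cw: "inner c (\<chi> i. u $ \<sigma> i) = (\<Sum>k<?n. a k * d k)"
  proof -
    have "inner c (\<chi> i. u $ \<sigma> i) = (\<Sum>k<?n. c $ (?L!k) * u $ \<sigma> (?L!k))"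
      unfolding inner_vec_def using sum_sortidx[of "\<lambda>i. inner (c$i) (u $ \<sigma> i)" c] by simp
    also have "\<dots> = (\<Sum>k<?n. a k * d k)"
      by (rule sum.cong) (auto simp: sig a_def d_def)
    finally show ?thesis .
  qed
  have part: "(\<Sum>i\<le>k. b i) \<le> (\<Sum>i\<le>k. d i)" if "Suc k < ?n" for k
  proof -
    have "(\<Sum>i\<le>k. b i) = sum (\<lambda>i. x$i) (topset c (Suc k))"
      using topset_props(2)[where j="Suc k" and v=c and f="\<lambda>i. x$i"] that unfolding b_def
      by (simp add: lessThan_Suc_atMost)
    also have "\<dots> \<le> (\<Sum>i<Suc k. x $ (?Lx ! i))"
      by (rule topk) (use topset_props(1)[of "Suc k" c] that in auto)
    also have "\<dots> = (\<Sum>i=1..Suc k. kth_largest x i)" using TT_eq[of "Suc k" x] that by simp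
    also have "\<dots> \<le> (\<Sum>i=1..Suc k. kth_largest u i)" using maj that unfolding majorizes_def by auto
    also have "\<dots> = (\<Sum>i\<le>k. d i)" using TT_eq[of "Suc k" u] that unfolding d_def
      by (simp add: lessThan_Suc_atMost)
    finally show ?thesis .
  qed
  have tot: "(\<Sum>i<?n. b i) = (\<Sum>i<?n. d i)"
  proof -
    have "(\<Sum>i<?n. b i) = (\<Sum>i<?n. x $ (?Lx ! i))"
      unfolding b_def using sum_sortidx[of "\<lambda>i. x$i" c] sum_sortidx[of "\<lambda>i. x$i" x] by simp
    also have "\<dots> = (\<Sum>i=1..?n. kth_largest x i)" using TT_eq[of ?n x] by simp
    also have "\<dots> = (\<Sum>i=1..?n. kth_largest u i)" using maj unfolding majorizes_def by auto
    also have "\<dots> = (\<Sum>i<?n. d i)" using TT_eq[of ?n u] unfolding d_def by simp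
    finally show ?thesis .
  qed
  have mono: "a (Suc k) \<le> a k" if "Suc k < ?n" for k
    unfolding a_def using sortidx_mono[of k "Suc k" c] that by auto
  have "inner c x \<le> inner c (\<chi> i. u $ \<sigma> i)"
    unfolding cx cw by (rule abel_ineq[where a=a and b=b and d=d, OF mono part tot])
  then show ?thesis using perm by blast
qed


lemma majorized_in_hull:
  fixes x u :: "real^'n"
  assumes maj: "u \<ge>\<^sub>m x"
  shows "x \<in> convex hull {(\<chi> i. u $ \<sigma> i) | \<sigma>. \<sigma> permutes (UNIV::'n set)}"
proof (rule ccontr)
  let ?V = "{(\<chi> i. u $ \<sigma> i) | \<sigma>. \<sigma> permutes (UNIV::'n set)}"
  assume nx: "x \<notin> convex hull ?V"
  have "finite ?V" using finite_permutations[of "UNIV::'n set"] by simp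
  then have "closed (convex hull ?V)" by (simp add: compact_imp_closed finite_imp_compact_convex_hull)
  then obtain a b where ab: "inner a x < b" "\<forall>y\<in>convex hull ?V. inner a y > b"
    using separating_hyperplane_closed_point[OF convex_convex_hull _ nx] by blast
  obtain \<sigma> where s: "\<sigma> permutes UNIV" "inner (-a) x \<le> inner (-a) (\<chi> i. u $ \<sigma> i)"
    using perm_bound[OF maj, of "-a"] by blast
  have "(\<chi> i. u $ \<sigma> i) \<in> convex hull ?V" using s(1) by (intro hull_inc) blast
  then have "inner a (\<chi> i. u $ \<sigma> i) > b" using ab by blast
  then show False using ab(1) s(2) by simp
qed

lemma sorted_desc_perm:
  fixes u :: "real^'n"
  assumes "\<sigma> permutes (UNIV::'n set)"
  shows "sorted_desc (\<chi> i. u $ \<sigma> i) = sorted_desc u"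
proof -
  have inj: "inj_on \<sigma> UNIV" using assms permutes_inj by blast
  have e: "image_mset \<sigma> (mset_set UNIV) = mset_set UNIV"
    using image_mset_mset_set[OF inj] permutes_image[OF assms] by simp
  have "image_mset (($) (\<chi> i. u $ \<sigma> i)) (mset_set (UNIV::'n set))
      = image_mset (($) u) (image_mset \<sigma> (mset_set UNIV))"
    by (simp add: multiset.map_comp comp_def) (rule image_mset_cong, simp)
  also have "\<dots> = image_mset (($) u) (mset_set UNIV)" using e by simp
  finally show ?thesis unfolding sorted_desc_def by simp
qed

lemma majorizes_perm_left:
  fixes u x :: "real^'n"
  assumes "\<sigma> permutes (UNIV::'n set)"
  shows "(\<chi> i. u $ \<sigma> i) \<ge>\<^sub>m x \<longleftrightarrow> u \<ge>\<^sub>m x"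
  unfolding majorizes_def kth_largest_def sorted_desc_perm[OF assms] ..

lemma majorizes_perm_right:
  fixes u x :: "real^'n"
  assumes "\<sigma> permutes (UNIV::'n set)"
  shows "x \<ge>\<^sub>m (\<chi> i. u $ \<sigma> i) \<longleftrightarrow> x \<ge>\<^sub>m u"
  unfolding majorizes_def kth_largest_def sorted_desc_perm[OF assms] ..


lemma TT_lip1:
  fixes u v :: "real^'n"
  assumes "j \<le> CARD('n)"
  shows "(\<Sum>k<j. u $ (sortidx u ! k)) \<le> (\<Sum>k<j. v $ (sortidx v ! k)) + (\<Sum>i\<in>UNIV. \<bar>u$i - v$i\<bar>)"
proof -
  let ?T = "topset u j"
  have "(\<Sum>k<j. u $ (sortidx u ! k)) = sum (\<lambda>i. u$i) ?T"
    using topset_props(2)[OF assms, where v=u and f="\<lambda>i. u$i"] .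
  also have "\<dots> \<le> sum (\<lambda>i. v$i + \<bar>u$i - v$i\<bar>) ?T" by (rule sum_mono) auto
  also have "\<dots> = sum (\<lambda>i. v$i) ?T + sum (\<lambda>i. \<bar>u$i - v$i\<bar>) ?T" by (simp add: sum.distrib)
  also have "sum (\<lambda>i. v$i) ?T \<le> (\<Sum>k<j. v $ (sortidx v ! k))"
    by (rule topk) (rule topset_props(1)[OF assms])
  also have "sum (\<lambda>i. \<bar>u$i - v$i\<bar>) ?T \<le> (\<Sum>i\<in>UNIV. \<bar>u$i - v$i\<bar>)"
    by (rule sum_mono2) auto
  finally show ?thesis by simp
qed

lemma TT_cont:
  fixes j :: nat
  assumes "j \<le> CARD('n)"
  shows "continuous_on UNIV (\<lambda>v::real^'n. \<Sum>i=1..j. kth_largest v i)"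
proof -
  have "(real CARD('n))-lipschitz_on UNIV (\<lambda>v::real^'n. \<Sum>k<j. v $ (sortidx v ! k))"
  proof (rule lipschitz_onI)
    fix u v :: "real^'n"
    have s: "(\<Sum>i\<in>UNIV. \<bar>u$i - v$i\<bar>) \<le> real CARD('n) * dist u v"
    proof -
      have "(\<Sum>i\<in>UNIV. \<bar>u$i - v$i\<bar>) \<le> (\<Sum>i\<in>(UNIV::'n set). dist u v)"
        by (rule sum_mono) (metis component_le_norm_cart dist_norm vector_minus_component)
      then show ?thesis by simp
    qed
    show "dist (\<Sum>k<j. u $ (sortidx u ! k)) (\<Sum>k<j. v $ (sortidx v ! k)) \<le> real CARD('n) * dist u v"
      using TT_lip1[OF assms, of u v] TT_lip1[OF assms, of v u] s
      by (simp add: dist_real_def abs_minus_commute abs_le_iff)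
  qed simp
  then have "continuous_on UNIV (\<lambda>v::real^'n. \<Sum>k<j. v $ (sortidx v ! k))"
    by (rule lipschitz_on_continuous_on)
  moreover have "(\<lambda>v::real^'n. \<Sum>i=1..j. kth_largest v i) = (\<lambda>v. \<Sum>k<j. v $ (sortidx v ! k))"
    using TT_eq[OF assms] by auto
  ultimately show ?thesis by metis
qed


lemma majorizes_refl: "(x::real^'n) \<ge>\<^sub>m x"
  unfolding majorizes_def by simp

lemma majorizes_trans: "(a::real^'n) \<ge>\<^sub>m b \<Longrightarrow> b \<ge>\<^sub>m c \<Longrightarrow> a \<ge>\<^sub>m c"
  unfolding majorizes_def by (metis order_trans)

lemma sorted_desc_eqI:
  fixes u v :: "real^'n"
  assumes "\<And>i. 1 \<le> i \<Longrightarrow> i \<le> CARD('n) \<Longrightarrow> kth_largest u i = kth_largest v i"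
  shows "sorted_desc u = sorted_desc v"
proof (rule nth_equalityI)
  show "length (sorted_desc u) = length (sorted_desc v)"
    by (simp add: sorted_desc_sortidx sortidx_basic)
  fix k assume "k < length (sorted_desc u)"
  then have "k < CARD('n)" by (simp add: sorted_desc_sortidx sortidx_basic)
  then show "sorted_desc u ! k = sorted_desc v ! k"
    using assms[of "Suc k"] by (simp add: kth_largest_def)
qed

lemma closed_majorizing: "closed {u::real^'n. u \<ge>\<^sub>m x}"
proof -
  have eq: "{u::real^'n. u \<ge>\<^sub>m x} = (\<Inter>j\<in>{1..<CARD('n)}. {u. (\<Sum>i=1..j. kth_largest x i) \<le> (\<Sum>i=1..j. kth_largest u i)})
     \<inter> {u. (\<Sum>i=1..CARD('n). kth_largest u i) = (\<Sum>i=1..CARD('n). kth_largest x i)}"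
    unfolding majorizes_def by auto
  show ?thesis unfolding eq
    by (intro closed_Int closed_INT ballI closed_Collect_le closed_Collect_eq continuous_on_const TT_cont) auto
qed

lemma exists_maximal:
  fixes P :: "(real^'n) set"
  assumes "compact P" "x \<in> P"
  shows "\<exists>u\<in>P. u \<ge>\<^sub>m x \<and> \<not> (\<exists>u'\<in>P. u' \<ge>\<^sub>m u \<and> sorted_desc u' \<noteq> sorted_desc u)"
proof -
  let ?n = "CARD('n)"
  define TT where "TT j v = (\<Sum>i=1..j. kth_largest v i)" for j and v :: "real^'n"
  define f where "f v = (\<Sum>j=1..?n. TT j v)" for v
  define Q where "Q = P \<inter> {u. u \<ge>\<^sub>m x}"
  have cQ: "compact Q" unfolding Q_def using assms(1) closed_majorizing by (rule compact_Int_closed)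
  have nQ: "Q \<noteq> {}" unfolding Q_def using assms(2) majorizes_refl by blast
  have cf: "continuous_on Q f" unfolding f_def TT_def
    by (intro continuous_on_sum continuous_on_subset[OF TT_cont]) auto
  obtain u where u: "u \<in> Q" "\<And>y. y \<in> Q \<Longrightarrow> f y \<le> f u"
    using compact_attains_sup[of "f ` Q"] compact_continuous_image[OF cf cQ] nQ by auto
  have "\<not> (\<exists>u'\<in>P. u' \<ge>\<^sub>m u \<and> sorted_desc u' \<noteq> sorted_desc u)"
  proof
    assume "\<exists>u'\<in>P. u' \<ge>\<^sub>m u \<and> sorted_desc u' \<noteq> sorted_desc u"
    then obtain u' where u': "u' \<in> P" "u' \<ge>\<^sub>m u" "sorted_desc u' \<noteq> sorted_desc u" by blast
    have "u' \<in> Q" using u(1) u' majorizes_trans unfolding Q_def by blast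
    then have le: "f u' \<le> f u" by (rule u(2))
    have ge: "TT j u \<le> TT j u'" if "j \<in> {1..?n}" for j
      using u'(2) that unfolding majorizes_def TT_def
      by (cases "j = ?n") auto
    have "(\<Sum>j=1..?n. TT j u' - TT j u) = f u' - f u" unfolding f_def by (simp add: sum_subtractf)
    then have "(\<Sum>j=1..?n. TT j u' - TT j u) = 0"
      using le sum_nonneg[of "{1..?n}" "\<lambda>j. TT j u' - TT j u"] ge by force
    then have eqj: "TT j u' = TT j u" if "j \<in> {1..?n}" for j
      using sum_nonneg_eq_0_iff[of "{1..?n}" "\<lambda>j. TT j u' - TT j u"] ge that by force
    have "kth_largest u' i = kth_largest u i" if "1 \<le> i" "i \<le> ?n" for i
    proof -
      have d: "kth_largest v i = TT i v - TT (i-1) v" for v :: "real^'n"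
        using that unfolding TT_def
        by (cases i) (auto simp: sum.atLeast1_atMost_eq)
      show ?thesis
      proof (cases "i = 1")
        case True then show ?thesis using eqj[of 1] that unfolding TT_def by simp
      next
        case False
        then have "i-1 \<in> {1..?n}" using that by auto
        then have "TT (i-1) u' = TT (i-1) u" by (rule eqj)
        then show ?thesis using d[of u] d[of u'] eqj[of i] that by simp
      qed
    qed
    then show False using u'(3) sorted_desc_eqI by blast
  qed
  then show ?thesis using u(1) unfolding Q_def by blast
qed


theorem mainTheorem12:
  fixes P :: "(real^'n) set" and \<phi> :: "real^'n \<Rightarrow> real" and \<alpha> :: real
  assumes "polytope P"
    and "permutation_invariant P"
    and "schur_concave_on P \<phi>"
  defines "S \<equiv> {(x, t). x \<in> P \<and> \<phi> x \<le> t \<and> t \<le> \<alpha>}"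
    and "X \<equiv> {(x, t). x \<in> {y \<in> P. \<not> (\<exists>u\<in>P. u \<ge>\<^sub>m y \<and> sorted_desc u \<noteq> sorted_desc y)} \<and> \<phi> x \<le> t \<and> t \<le> \<alpha>}"
  shows "convex hull S = convex hull X"
proof
  show "convex hull X \<subseteq> convex hull S"
    by (rule hull_mono) (auto simp: S_def X_def)
  show "convex hull S \<subseteq> convex hull X"
  proof (rule hull_minimal)
    show "convex (convex hull X)" by (rule convex_convex_hull)
    show "S \<subseteq> convex hull X"
    proof
      fix p assume "p \<in> S"
      then obtain x t where p: "p = (x, t)" "x \<in> P" "\<phi> x \<le> t" "t \<le> \<alpha>" unfolding S_def by blast
      obtain u where u: "u \<in> P" "u \<ge>\<^sub>m x" "\<not> (\<exists>u'\<in>P. u' \<ge>\<^sub>m u \<and> sorted_desc u' \<noteq> sorted_desc u)"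
        using exists_maximal[OF polytope_imp_compact[OF assms(1)] p(2)] by blast
      define V where "V = {(\<chi> i. u $ \<sigma> i) | \<sigma>. \<sigma> permutes (UNIV::'n set)}"
      have finV: "finite V" unfolding V_def using finite_permutations[of "UNIV::'n set"] by simp
      have VX: "(w, t) \<in> X" if "w \<in> V" for w
      proof -
        obtain \<sigma> where s: "\<sigma> permutes UNIV" "w = (\<chi> i. u $ \<sigma> i)" using \<open>w \<in> V\<close> V_def by blast
        have wP: "w \<in> P" using assms(2) u(1) s unfolding permutation_invariant_def by blast
        have "w \<ge>\<^sub>m x" using majorizes_perm_left[OF s(1)] u(2) s(2) by simp
        then have "\<phi> w \<le> \<phi> x" using assms(3) wP p(2) unfolding schur_concave_on_def by blast
        moreover have "\<not> (\<exists>u'\<in>P. u' \<ge>\<^sub>m w \<and> sorted_desc u' \<noteq> sorted_desc w)"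
          using u(3) majorizes_perm_right[OF s(1)] sorted_desc_perm[OF s(1)] s(2) by auto
        ultimately show ?thesis unfolding X_def using wP p by auto
      qed
      have "x \<in> convex hull V" unfolding V_def by (rule majorized_in_hull[OF u(2)])
      then obtain c where c: "\<forall>w\<in>V. 0 \<le> c w" "sum c V = 1" "(\<Sum>w\<in>V. c w *\<^sub>R w) = x"
        using convex_hull_finite[OF finV] by blast
      have "(\<Sum>w\<in>V. c w *\<^sub>R (w, t)) \<in> convex hull X"
        by (rule convex_sum[OF finV convex_convex_hull]) (use c VX in \<open>auto intro: hull_inc\<close>)
      moreover have "(\<Sum>w\<in>V. c w *\<^sub>R (w, t)) = (x, t)"
      proof -
        have "(\<Sum>w\<in>V. c w *\<^sub>R (w, t)) = (\<Sum>w\<in>V. c w *\<^sub>R w, \<Sum>w\<in>V. c w *\<^sub>R t)"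
          by (induction rule: finite_induct[OF finV]) (auto simp: zero_prod_def)
        also have "\<dots> = (x, t)" using c by (simp add: sum_distrib_right[symmetric])
        finally show ?thesis .
      qed
      ultimately show "p \<in> convex hull X" using p(1) by simp
    qed
  qed
qed

end
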